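(* Let $a, b$ be integers with $0 < a \le b$ and let $L_{a,b} = \{C_{i,1} : 1 \le i \le a+1\} \cup \{C_{1,j} : 1 < j \le b+1\}$, of size $n = a+b+1$. Then on the $n \times n$ board, $2 \le \mathrm{cp}_{\mathrm{free}}(L_{a,b}) \le 5$.
   Context: For integers $i,j$, $C_{i,j}$ denotes the unit square cell in column $i$ and row $j$ of the integer grid (columns numbered left to right, rows numbered top to bottom). A polyomino is a finite set of cells; its size is its number of cells. For a polyomino $\mathcal{P}$ of size $n$ the board is $\mathbb{B} = \{C_{i,j} : 1 \le i,j \le n\}$. The shift of $\mathcal{P}$ by integers $(c,d)$ is $\mathcal{P}+(c,d) = \{C_{x+c,y+d} : C_{x,y} \in \mathcal{P}\}$. The rotations of $L_{a,b}$ by $90^\circ, 180^\circ, 270^\circ$ clockwise are $LR_{a,b} = \{C_{i,1} : 1 \le i \le b+1\} \cup \{C_{b+1,j} : 1 \le j \le a+1\}$, $LR^2_{a,b} = \{C_{i,b+1} : 1 \le i \le a+1\} \cup \{C_{a+1,j} : 1 \le j \le b+1\}$, $LR^3_{a,b} = \{C_{i,a+1} : 1 \le i \le b+1\} \cup \{C_{1,j} : 1 \le j \le a+1\}$ (reflections are not allowed). A free copy of $L_{a,b}$ is any shift of one of these four. A set of polyominoes is a valid arrangement if each is contained in $\mathbb{B}$ and they are pairwise disjoint. A free packing of $\mathcal{P}$ is a set of free copies of $\mathcal{P}$ forming a valid arrangement such that adding any further free copy of $\mathcal{P}$ yields an invalid arrangement. The clumsy free packing number $\mathrm{cp}_{\mathrm{free}}(\mathcal{P})$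 is the minimum number of polyominoes in a free packing of $\mathcal{P}$ on the $n \times n$ board. *)

theory Defs
  imports Main
begin

text \<open>A cell C_{i,j} (column i, row j) is the pair (i, j) of integers.\<close>
type_synonym cell = "int \<times> int"

definition shift :: "cell set \<Rightarrow> int \<Rightarrow> int \<Rightarrow> cell set" where
  "shift P c d = (\<lambda>(x, y). (x + c, y + d)) ` P"

definition board :: "nat \<Rightarrow> cell set" where
  "board n = {1..int n} \<times> {1..int n}"

definition L :: "int \<Rightarrow> int \<Rightarrow> cell set" where
  "L a b = {(i, 1) | i. 1 \<le> i \<and> i \<le> a + 1} \<union> {(1, j) | j. 1 < j \<and> j \<le> b + 1}"

definition LR :: "int \<Rightarrow> int \<Rightarrow> cell set" where
  "LR a b = {(i, 1) | i. 1 \<le> i \<and> i \<le> b + 1} \<union> {(b + 1, j) | j. 1 \<le> j \<and> j \<le> a + 1}"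

definition LR2 :: "int \<Rightarrow> int \<Rightarrow> cell set" where
  "LR2 a b = {(i, b + 1) | i. 1 \<le> i \<and> i \<le> a + 1} \<union> {(a + 1, j) | j. 1 \<le> j \<and> j \<le> b + 1}"

definition LR3 :: "int \<Rightarrow> int \<Rightarrow> cell set" where
  "LR3 a b = {(i, a + 1) | i. 1 \<le> i \<and> i \<le> b + 1} \<union> {(1, j) | j. 1 \<le> j \<and> j \<le> a + 1}"

text \<open>Free copies of L_{a,b}: shifts of one of the four rotations.\<close>
definition free_copies_L :: "int \<Rightarrow> int \<Rightarrow> cell set set" where
  "free_copies_L a b = {shift R c d | R c d. R \<in> {L a b, LR a b, LR2 a b, LR3 a b}}"

definition valid_arrangement :: "nat \<Rightarrow> cell set set \<Rightarrow> bool" where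
  "valid_arrangement n S \<longleftrightarrow>
     (\<forall>P\<in>S. P \<subseteq> board n) \<and> (\<forall>P\<in>S. \<forall>Q\<in>S. P \<noteq> Q \<longrightarrow> P \<inter> Q = {})"

definition free_packing :: "cell set set \<Rightarrow> nat \<Rightarrow> cell set set \<Rightarrow> bool" where
  "free_packing F n S \<longleftrightarrow> S \<subseteq> F \<and> valid_arrangement n S \<and>
     (\<forall>Q\<in>F. Q \<notin> S \<longrightarrow> \<not> valid_arrangement n (insert Q S))"

definition cp_free_L :: "int \<Rightarrow> int \<Rightarrow> nat" where
  "cp_free_L a b = (LEAST k. \<exists>S. free_packing (free_copies_L a b) (nat (a + b + 1)) S \<and> card S = k)"

end

theory Submission imports Defs begin

definition hseg :: "int \<Rightarrow> int \<Rightarrow> int \<Rightarrow> cell set" where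
  "hseg y x1 x2 = {(x, y) | x. x1 \<le> x \<and> x \<le> x2}"
definition vseg :: "int \<Rightarrow> int \<Rightarrow> int \<Rightarrow> cell set" where
  "vseg x y1 y2 = {(x, y) | y. y1 \<le> y \<and> y \<le> y2}"

lemma mem_shift: "p \<in> shift P c d \<longleftrightarrow> (fst p - c, snd p - d) \<in> P"
  unfolding shift_def by (cases p) (force simp: image_iff)

lemma shift_L: "0 \<le> a \<Longrightarrow> 0 \<le> b \<Longrightarrow> shift (L a b) c d = hseg (d+1) (c+1) (c+a+1) \<union> vseg (c+1) (d+1) (d+b+1)"
  by (auto simp: mem_shift L_def hseg_def vseg_def)
lemma shift_LR: "0 \<le> a \<Longrightarrow> 0 \<le> b \<Longrightarrow> shift (LR a b) c d = hseg (d+1) (c+1) (c+b+1) \<union> vseg (c+b+1) (d+1) (d+a+1)"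
  by (auto simp: mem_shift LR_def hseg_def vseg_def)
lemma shift_LR2: "0 \<le> a \<Longrightarrow> 0 \<le> b \<Longrightarrow> shift (LR2 a b) c d = hseg (d+b+1) (c+1) (c+a+1) \<union> vseg (c+a+1) (d+1) (d+b+1)"
  by (auto simp: mem_shift LR2_def hseg_def vseg_def)
lemma shift_LR3: "0 \<le> a \<Longrightarrow> 0 \<le> b \<Longrightarrow> shift (LR3 a b) c d = hseg (d+a+1) (c+1) (c+b+1) \<union> vseg (c+1) (d+1) (d+a+1)"
  by (auto simp: mem_shift LR3_def hseg_def vseg_def)

lemma hh: "hseg y x1 x2 \<inter> hseg y' x1' x2' \<noteq> {} \<longleftrightarrow> y = y' \<and> x1 \<le> x2 \<and> x1' \<le> x2' \<and> x1 \<le> x2' \<and> x1' \<le> x2"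
proof
  assume "hseg y x1 x2 \<inter> hseg y' x1' x2' \<noteq> {}" then show "y = y' \<and> x1 \<le> x2 \<and> x1' \<le> x2' \<and> x1 \<le> x2' \<and> x1' \<le> x2"
    by (auto simp: hseg_def)
next
  assume "y = y' \<and> x1 \<le> x2 \<and> x1' \<le> x2' \<and> x1 \<le> x2' \<and> x1' \<le> x2"
  then have "(max x1 x1', y) \<in> hseg y x1 x2 \<inter> hseg y' x1' x2'" by (auto simp: hseg_def)
  then show "hseg y x1 x2 \<inter> hseg y' x1' x2' \<noteq> {}" by blast
qed
lemma vv: "vseg x y1 y2 \<inter> vseg x' y1' y2' \<noteq> {} \<longleftrightarrow> x = x' \<and> y1 \<le> y2 \<and> y1' \<le> y2' \<and> y1 \<le> y2' \<and> y1' \<le> y2"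
proof
  assume "vseg x y1 y2 \<inter> vseg x' y1' y2' \<noteq> {}" then show "x = x' \<and> y1 \<le> y2 \<and> y1' \<le> y2' \<and> y1 \<le> y2' \<and> y1' \<le> y2"
    by (auto simp: vseg_def)
next
  assume "x = x' \<and> y1 \<le> y2 \<and> y1' \<le> y2' \<and> y1 \<le> y2' \<and> y1' \<le> y2"
  then have "(x, max y1 y1') \<in> vseg x y1 y2 \<inter> vseg x' y1' y2'" by (auto simp: vseg_def)
  then show "vseg x y1 y2 \<inter> vseg x' y1' y2' \<noteq> {}" by blast
qed
lemma hv: "hseg y x1 x2 \<inter> vseg x y1 y2 \<noteq> {} \<longleftrightarrow> x1 \<le> x \<and> x \<le> x2 \<and> y1 \<le> y \<and> y \<le> y2"
  by (auto simp: hseg_def vseg_def)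
lemma vh: "vseg x y1 y2 \<inter> hseg y x1 x2 \<noteq> {} \<longleftrightarrow> x1 \<le> x \<and> x \<le> x2 \<and> y1 \<le> y \<and> y \<le> y2"
  by (auto simp: hseg_def vseg_def)
lemma Un_Int_ne: "(A \<union> B) \<inter> C \<noteq> {} \<longleftrightarrow> A \<inter> C \<noteq> {} \<or> B \<inter> C \<noteq> {}"
  "C \<inter> (A \<union> B) \<noteq> {} \<longleftrightarrow> C \<inter> A \<noteq> {} \<or> C \<inter> B \<noteq> {}" by auto

lemma hseg_board: "x1 \<le> x2 \<Longrightarrow> hseg y x1 x2 \<subseteq> board n \<longleftrightarrow> 1 \<le> y \<and> y \<le> int n \<and> 1 \<le> x1 \<and> x2 \<le> int n"
  by (auto simp: hseg_def board_def)
lemma vseg_board: "y1 \<le> y2 \<Longrightarrow> vseg x y1 y2 \<subseteq> board n \<longleftrightarrow> 1 \<le> x \<and> x \<le> int n \<and> 1 \<le> y1 \<and> y2 \<le> int n"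
  by (auto simp: vseg_def board_def)

lemmas segs = shift_L shift_LR shift_LR2 shift_LR3 Un_Int_ne hh hv vh vv

lemma board_L: "0 \<le> a \<Longrightarrow> 0 \<le> b \<Longrightarrow> shift (L a b) c d \<subseteq> board n \<longleftrightarrow> 0 \<le> c \<and> c+a+1 \<le> int n \<and> 0 \<le> d \<and> d+b+1 \<le> int n"
  by (simp add: shift_L hseg_board vseg_board) arith
lemma board_LR: "0 \<le> a \<Longrightarrow> 0 \<le> b \<Longrightarrow> shift (LR a b) c d \<subseteq> board n \<longleftrightarrow> 0 \<le> c \<and> c+b+1 \<le> int n \<and> 0 \<le> d \<and> d+a+1 \<le> int n"
  by (simp add: shift_LR hseg_board vseg_board) arith
lemma board_LR2: "0 \<le> a \<Longrightarrow> 0 \<le> b \<Longrightarrow> shift (LR2 a b) c d \<subseteq> board n \<longleftrightarrow> 0 \<le> c \<and> c+a+1 \<le> int n \<and> 0 \<le> d \<and> d+b+1 \<le> int n"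
  by (simp add: shift_LR2 hseg_board vseg_board) arith
lemma board_LR3: "0 \<le> a \<Longrightarrow> 0 \<le> b \<Longrightarrow> shift (LR3 a b) c d \<subseteq> board n \<longleftrightarrow> 0 \<le> c \<and> c+b+1 \<le> int n \<and> 0 \<le> d \<and> d+a+1 \<le> int n"
  by (simp add: shift_LR3 hseg_board vseg_board) arith

lemma in_F: "R \<in> {L a b, LR a b, LR2 a b, LR3 a b} \<Longrightarrow> shift R c d \<in> free_copies_L a b"
  unfolding free_copies_L_def by blast

lemma F_cases:
  assumes "Q \<in> free_copies_L a b"
  obtains c d where "Q = shift (L a b) c d" | c d where "Q = shift (LR a b) c d"
    | c d where "Q = shift (LR2 a b) c d" | c d where "Q = shift (LR3 a b) c d"
  using assms unfolding free_copies_L_def by blast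

lemma packing_intro:
  assumes "S \<subseteq> F" "valid_arrangement n S" "\<And>Q. Q \<in> F \<Longrightarrow> Q \<subseteq> board n \<Longrightarrow> \<exists>P\<in>S. P \<inter> Q \<noteq> {}"
  shows "free_packing F n S"
  unfolding free_packing_def
proof (intro conjI ballI impI assms(1,2))
  fix Q assume Q: "Q \<in> F" "Q \<notin> S"
  show "\<not> valid_arrangement n (insert Q S)"
  proof
    assume v: "valid_arrangement n (insert Q S)"
    then have "Q \<subseteq> board n" unfolding valid_arrangement_def by blast
    then obtain P where P: "P \<in> S" "P \<inter> Q \<noteq> {}" using assms(3) Q by blast
    with Q have "P \<noteq> Q" by blast
    with v P show False unfolding valid_arrangement_def by blast
  qed
qed

lemma T1:
  fixes a b :: int
  assumes "0<a" "a \<le> b" "b \<le> a+1"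
  shows "\<exists>S. free_packing (free_copies_L a b) (nat (a+b+1)) S \<and> card S \<le> 5"
proof -
  define n where "n = nat (a+b+1)"
  have n: "int n = a+b+1" using assms by (simp add: n_def)
  have ab: "0 \<le> a" "0 \<le> b" using assms by auto
  define S where "S = set [(shift (LR3 a b) (a) (0)), (shift (LR3 a b) (b-1) (b))]"
  have cardS: "card S \<le> 5" unfolding S_def by (rule order_trans[OF card_length]) simp
  have sub: "S \<subseteq> free_copies_L a b" unfolding S_def by (auto intro!: in_F)
  have b0: "(shift (LR3 a b) (a) (0)) \<subseteq> board n" using assms n by (simp add: board_LR3)
  have b1: "(shift (LR3 a b) (b-1) (b)) \<subseteq> board n" using assms n by (simp add: board_LR3)
  have d0_1: "\<not> ((shift (LR3 a b) (a) (0)) \<inter> (shift (LR3 a b) (b-1) (b)) \<noteq> {})" using assms by (simp only: segs ab) smt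
  have valid: "valid_arrangement n S" unfolding valid_arrangement_def S_def using b0 b1 d0_1 by (auto simp: Int_commute)
  have blk: "\<exists>P\<in>S. P \<inter> Q \<noteq> {}" if Q: "Q \<in> free_copies_L a b" "Q \<subseteq> board n" for Q
    using Q(1)
  proof (cases rule: F_cases)
    case (1 c d)
    with Q(2) have bd: "0 \<le> c \<and> 0 \<le> d" "c + a + 1 \<le> a+b+1" "d + b + 1 \<le> a+b+1" using n ab by (simp_all add: board_L)
    have "(shift (LR3 a b) (a) (0)) \<inter> Q \<noteq> {} \<or> (shift (LR3 a b) (b-1) (b)) \<inter> Q \<noteq> {}" unfolding 1 using assms bd by (simp only: segs ab) smt
    then show ?thesis unfolding S_def by auto
  next
    case (2 c d)
    with Q(2) have bd: "0 \<le> c \<and> 0 \<le> d" "c + b + 1 \<le> a+b+1" "d + a + 1 \<le> a+b+1" using n ab by (simp_all add: board_LR)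
    have "(shift (LR3 a b) (a) (0)) \<inter> Q \<noteq> {} \<or> (shift (LR3 a b) (b-1) (b)) \<inter> Q \<noteq> {}" unfolding 2 using assms bd by (simp only: segs ab) smt
    then show ?thesis unfolding S_def by auto
  next
    case (3 c d)
    with Q(2) have bd: "0 \<le> c \<and> 0 \<le> d" "c + a + 1 \<le> a+b+1" "d + b + 1 \<le> a+b+1" using n ab by (simp_all add: board_LR2)
    have "(shift (LR3 a b) (a) (0)) \<inter> Q \<noteq> {} \<or> (shift (LR3 a b) (b-1) (b)) \<inter> Q \<noteq> {}" unfolding 3 using assms bd by (simp only: segs ab) smt
    then show ?thesis unfolding S_def by auto
  next
    case (4 c d)
    with Q(2) have bd: "0 \<le> c \<and> 0 \<le> d" "c + b + 1 \<le> a+b+1" "d + a + 1 \<le> a+b+1" using n ab by (simp_all add: board_LR3)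
    have "(shift (LR3 a b) (a) (0)) \<inter> Q \<noteq> {} \<or> (shift (LR3 a b) (b-1) (b)) \<inter> Q \<noteq> {}" unfolding 4 using assms bd by (simp only: segs ab) smt
    then show ?thesis unfolding S_def by auto
  qed
  have "free_packing (free_copies_L a b) n S" by (rule packing_intro[OF sub valid blk])
  then show ?thesis using cardS n_def by blast
qed

lemma T2:
  fixes a b :: int
  assumes "0<a" "a+2 \<le> b" "b \<le> 2*a+2"
  shows "\<exists>S. free_packing (free_copies_L a b) (nat (a+b+1)) S \<and> card S \<le> 5"
proof -
  define n where "n = nat (a+b+1)"
  have n: "int n = a+b+1" using assms by (simp add: n_def)
  have ab: "0 \<le> a" "0 \<le> b" using assms by auto
  define S where "S = set [(shift (LR2 a b) (0) (0)), (shift (LR2 a b) (a+1) (0)), (shift (LR2 a b) (a+2) (a))]"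
  have cardS: "card S \<le> 5" unfolding S_def by (rule order_trans[OF card_length]) simp
  have sub: "S \<subseteq> free_copies_L a b" unfolding S_def by (auto intro!: in_F)
  have b0: "(shift (LR2 a b) (0) (0)) \<subseteq> board n" using assms n by (simp add: board_LR2)
  have b1: "(shift (LR2 a b) (a+1) (0)) \<subseteq> board n" using assms n by (simp add: board_LR2)
  have b2: "(shift (LR2 a b) (a+2) (a)) \<subseteq> board n" using assms n by (simp add: board_LR2)
  have d0_1: "\<not> ((shift (LR2 a b) (0) (0)) \<inter> (shift (LR2 a b) (a+1) (0)) \<noteq> {})" using assms by (simp only: segs ab) smt
  have d0_2: "\<not> ((shift (LR2 a b) (0) (0)) \<inter> (shift (LR2 a b) (a+2) (a)) \<noteq> {})" using assms by (simp only: segs ab) smt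
  have d1_2: "\<not> ((shift (LR2 a b) (a+1) (0)) \<inter> (shift (LR2 a b) (a+2) (a)) \<noteq> {})" using assms by (simp only: segs ab) smt
  have valid: "valid_arrangement n S" unfolding valid_arrangement_def S_def using b0 b1 b2 d0_1 d0_2 d1_2 by (auto simp: Int_commute)
  have blk: "\<exists>P\<in>S. P \<inter> Q \<noteq> {}" if Q: "Q \<in> free_copies_L a b" "Q \<subseteq> board n" for Q
    using Q(1)
  proof (cases rule: F_cases)
    case (1 c d)
    with Q(2) have bd: "0 \<le> c \<and> 0 \<le> d" "c + a + 1 \<le> a+b+1" "d + b + 1 \<le> a+b+1" using n ab by (simp_all add: board_L)
    have "(shift (LR2 a b) (0) (0)) \<inter> Q \<noteq> {} \<or> (shift (LR2 a b) (a+1) (0)) \<inter> Q \<noteq> {} \<or> (shift (LR2 a b) (a+2) (a)) \<inter> Q \<noteq> {}" unfolding 1 using assms bd by (simp only: segs ab) smt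
    then show ?thesis unfolding S_def by auto
  next
    case (2 c d)
    with Q(2) have bd: "0 \<le> c \<and> 0 \<le> d" "c + b + 1 \<le> a+b+1" "d + a + 1 \<le> a+b+1" using n ab by (simp_all add: board_LR)
    have "(shift (LR2 a b) (0) (0)) \<inter> Q \<noteq> {} \<or> (shift (LR2 a b) (a+1) (0)) \<inter> Q \<noteq> {} \<or> (shift (LR2 a b) (a+2) (a)) \<inter> Q \<noteq> {}" unfolding 2 using assms bd by (simp only: segs ab) smt
    then show ?thesis unfolding S_def by auto
  next
    case (3 c d)
    with Q(2) have bd: "0 \<le> c \<and> 0 \<le> d" "c + a + 1 \<le> a+b+1" "d + b + 1 \<le> a+b+1" using n ab by (simp_all add: board_LR2)
    have "(shift (LR2 a b) (0) (0)) \<inter> Q \<noteq> {} \<or> (shift (LR2 a b) (a+1) (0)) \<inter> Q \<noteq> {} \<or> (shift (LR2 a b) (a+2) (a)) \<inter> Q \<noteq> {}" unfolding 3 using assms bd by (simp only: segs ab) smt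
    then show ?thesis unfolding S_def by auto
  next
    case (4 c d)
    with Q(2) have bd: "0 \<le> c \<and> 0 \<le> d" "c + b + 1 \<le> a+b+1" "d + a + 1 \<le> a+b+1" using n ab by (simp_all add: board_LR3)
    have "(shift (LR2 a b) (0) (0)) \<inter> Q \<noteq> {} \<or> (shift (LR2 a b) (a+1) (0)) \<inter> Q \<noteq> {} \<or> (shift (LR2 a b) (a+2) (a)) \<inter> Q \<noteq> {}" unfolding 4 using assms bd by (simp only: segs ab) smt
    then show ?thesis unfolding S_def by auto
  qed
  have "free_packing (free_copies_L a b) n S" by (rule packing_intro[OF sub valid blk])
  then show ?thesis using cardS n_def by blast
qed

lemma T3:
  fixes a b :: int
  assumes "2 \<le> a" "2*a \<le> b"
  shows "\<exists>S. free_packing (free_copies_L a b) (nat (a+b+1)) S \<and> card S \<le> 5"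
proof -
  define n where "n = nat (a+b+1)"
  have n: "int n = a+b+1" using assms by (simp add: n_def)
  have ab: "0 \<le> a" "0 \<le> b" using assms by auto
  define S where "S = set [(shift (L a b) (a-1) (a)), (shift (LR a b) (0) (a-1)), (shift (LR a b) (a-1) (a-2)), (shift (LR2 a b) (b) (0)), (shift (LR3 a b) (a) (b-1))]"
  have cardS: "card S \<le> 5" unfolding S_def by (rule order_trans[OF card_length]) simp
  have sub: "S \<subseteq> free_copies_L a b" unfolding S_def by (auto intro!: in_F)
  have b0: "(shift (L a b) (a-1) (a)) \<subseteq> board n" using assms n by (simp add: board_L)
  have b1: "(shift (LR a b) (0) (a-1)) \<subseteq> board n" using assms n by (simp add: board_LR)
  have b2: "(shift (LR a b) (a-1) (a-2)) \<subseteq> board n" using assms n by (simp add: board_LR)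
  have b3: "(shift (LR2 a b) (b) (0)) \<subseteq> board n" using assms n by (simp add: board_LR2)
  have b4: "(shift (LR3 a b) (a) (b-1)) \<subseteq> board n" using assms n by (simp add: board_LR3)
  have d0_1: "\<not> ((shift (L a b) (a-1) (a)) \<inter> (shift (LR a b) (0) (a-1)) \<noteq> {})" using assms by (simp only: segs ab) smt
  have d0_2: "\<not> ((shift (L a b) (a-1) (a)) \<inter> (shift (LR a b) (a-1) (a-2)) \<noteq> {})" using assms by (simp only: segs ab) smt
  have d0_3: "\<not> ((shift (L a b) (a-1) (a)) \<inter> (shift (LR2 a b) (b) (0)) \<noteq> {})" using assms by (simp only: segs ab) smt
  have d0_4: "\<not> ((shift (L a b) (a-1) (a)) \<inter> (shift (LR3 a b) (a) (b-1)) \<noteq> {})" using assms by (simp only: segs ab) smt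
  have d1_2: "\<not> ((shift (LR a b) (0) (a-1)) \<inter> (shift (LR a b) (a-1) (a-2)) \<noteq> {})" using assms by (simp only: segs ab) smt
  have d1_3: "\<not> ((shift (LR a b) (0) (a-1)) \<inter> (shift (LR2 a b) (b) (0)) \<noteq> {})" using assms by (simp only: segs ab) smt
  have d1_4: "\<not> ((shift (LR a b) (0) (a-1)) \<inter> (shift (LR3 a b) (a) (b-1)) \<noteq> {})" using assms by (simp only: segs ab) smt
  have d2_3: "\<not> ((shift (LR a b) (a-1) (a-2)) \<inter> (shift (LR2 a b) (b) (0)) \<noteq> {})" using assms by (simp only: segs ab) smt
  have d2_4: "\<not> ((shift (LR a b) (a-1) (a-2)) \<inter> (shift (LR3 a b) (a) (b-1)) \<noteq> {})" using assms by (simp only: segs ab) smt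
  have d3_4: "\<not> ((shift (LR2 a b) (b) (0)) \<inter> (shift (LR3 a b) (a) (b-1)) \<noteq> {})" using assms by (simp only: segs ab) smt
  have valid: "valid_arrangement n S" unfolding valid_arrangement_def S_def using b0 b1 b2 b3 b4 d0_1 d0_2 d0_3 d0_4 d1_2 d1_3 d1_4 d2_3 d2_4 d3_4 by (auto simp: Int_commute)
  have blk: "\<exists>P\<in>S. P \<inter> Q \<noteq> {}" if Q: "Q \<in> free_copies_L a b" "Q \<subseteq> board n" for Q
    using Q(1)
  proof (cases rule: F_cases)
    case (1 c d)
    with Q(2) have bd: "0 \<le> c \<and> 0 \<le> d" "c + a + 1 \<le> a+b+1" "d + b + 1 \<le> a+b+1" using n ab by (simp_all add: board_L)
    have "(shift (L a b) (a-1) (a)) \<inter> Q \<noteq> {} \<or> (shift (LR a b) (0) (a-1)) \<inter> Q \<noteq> {} \<or> (shift (LR a b) (a-1) (a-2)) \<inter> Q \<noteq> {} \<or> (shift (LR2 a b) (b) (0)) \<inter> Q \<noteq> {} \<or> (shift (LR3 a b) (a) (b-1)) \<inter> Q \<noteq> {}" unfolding 1 using assms bd by (simp only: segs ab) smt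
    then show ?thesis unfolding S_def by auto
  next
    case (2 c d)
    with Q(2) have bd: "0 \<le> c \<and> 0 \<le> d" "c + b + 1 \<le> a+b+1" "d + a + 1 \<le> a+b+1" using n ab by (simp_all add: board_LR)
    have "(shift (L a b) (a-1) (a)) \<inter> Q \<noteq> {} \<or> (shift (LR a b) (0) (a-1)) \<inter> Q \<noteq> {} \<or> (shift (LR a b) (a-1) (a-2)) \<inter> Q \<noteq> {} \<or> (shift (LR2 a b) (b) (0)) \<inter> Q \<noteq> {} \<or> (shift (LR3 a b) (a) (b-1)) \<inter> Q \<noteq> {}" unfolding 2 using assms bd by (simp only: segs ab) smt
    then show ?thesis unfolding S_def by auto
  next
    case (3 c d)
    with Q(2) have bd: "0 \<le> c \<and> 0 \<le> d" "c + a + 1 \<le> a+b+1" "d + b + 1 \<le> a+b+1" using n ab by (simp_all add: board_LR2)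
    have "(shift (L a b) (a-1) (a)) \<inter> Q \<noteq> {} \<or> (shift (LR a b) (0) (a-1)) \<inter> Q \<noteq> {} \<or> (shift (LR a b) (a-1) (a-2)) \<inter> Q \<noteq> {} \<or> (shift (LR2 a b) (b) (0)) \<inter> Q \<noteq> {} \<or> (shift (LR3 a b) (a) (b-1)) \<inter> Q \<noteq> {}" unfolding 3 using assms bd by (simp only: segs ab) smt
    then show ?thesis unfolding S_def by auto
  next
    case (4 c d)
    with Q(2) have bd: "0 \<le> c \<and> 0 \<le> d" "c + b + 1 \<le> a+b+1" "d + a + 1 \<le> a+b+1" using n ab by (simp_all add: board_LR3)
    have "(shift (L a b) (a-1) (a)) \<inter> Q \<noteq> {} \<or> (shift (LR a b) (0) (a-1)) \<inter> Q \<noteq> {} \<or> (shift (LR a b) (a-1) (a-2)) \<inter> Q \<noteq> {} \<or> (shift (LR2 a b) (b) (0)) \<inter> Q \<noteq> {} \<or> (shift (LR3 a b) (a) (b-1)) \<inter> Q \<noteq> {}" unfolding 4 using assms bd by (simp only: segs ab) smt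
    then show ?thesis unfolding S_def by auto
  qed
  have "free_packing (free_copies_L a b) n S" by (rule packing_intro[OF sub valid blk])
  then show ?thesis using cardS n_def by blast
qed

lemma T4:
  fixes a b :: int
  assumes "a = 1" "2 \<le> b"
  shows "\<exists>S. free_packing (free_copies_L a b) (nat (a+b+1)) S \<and> card S \<le> 5"
proof -
  define n where "n = nat (a+b+1)"
  have n: "int n = a+b+1" using assms by (simp add: n_def)
  have ab: "0 \<le> a" "0 \<le> b" using assms by auto
  define S where "S = set [(shift (L a b) (0) (1)), (shift (LR a b) (0) (0)), (shift (LR2 a b) (b) (0)), (shift (LR3 a b) (1) (b))]"
  have cardS: "card S \<le> 5" unfolding S_def by (rule order_trans[OF card_length]) simp
  have sub: "S \<subseteq> free_copies_L a b" unfolding S_def by (auto intro!: in_F)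
  have b0: "(shift (L a b) (0) (1)) \<subseteq> board n" using assms n by (simp add: board_L)
  have b1: "(shift (LR a b) (0) (0)) \<subseteq> board n" using assms n by (simp add: board_LR)
  have b2: "(shift (LR2 a b) (b) (0)) \<subseteq> board n" using assms n by (simp add: board_LR2)
  have b3: "(shift (LR3 a b) (1) (b)) \<subseteq> board n" using assms n by (simp add: board_LR3)
  have d0_1: "\<not> ((shift (L a b) (0) (1)) \<inter> (shift (LR a b) (0) (0)) \<noteq> {})" using assms by (simp only: segs ab) smt
  have d0_2: "\<not> ((shift (L a b) (0) (1)) \<inter> (shift (LR2 a b) (b) (0)) \<noteq> {})" using assms by (simp only: segs ab) smt
  have d0_3: "\<not> ((shift (L a b) (0) (1)) \<inter> (shift (LR3 a b) (1) (b)) \<noteq> {})" using assms by (simp only: segs ab) smt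
  have d1_2: "\<not> ((shift (LR a b) (0) (0)) \<inter> (shift (LR2 a b) (b) (0)) \<noteq> {})" using assms by (simp only: segs ab) smt
  have d1_3: "\<not> ((shift (LR a b) (0) (0)) \<inter> (shift (LR3 a b) (1) (b)) \<noteq> {})" using assms by (simp only: segs ab) smt
  have d2_3: "\<not> ((shift (LR2 a b) (b) (0)) \<inter> (shift (LR3 a b) (1) (b)) \<noteq> {})" using assms by (simp only: segs ab) smt
  have valid: "valid_arrangement n S" unfolding valid_arrangement_def S_def using b0 b1 b2 b3 d0_1 d0_2 d0_3 d1_2 d1_3 d2_3 by (auto simp: Int_commute)
  have blk: "\<exists>P\<in>S. P \<inter> Q \<noteq> {}" if Q: "Q \<in> free_copies_L a b" "Q \<subseteq> board n" for Q
    using Q(1)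
  proof (cases rule: F_cases)
    case (1 c d)
    with Q(2) have bd: "0 \<le> c \<and> 0 \<le> d" "c + a + 1 \<le> a+b+1" "d + b + 1 \<le> a+b+1" using n ab by (simp_all add: board_L)
    have "(shift (L a b) (0) (1)) \<inter> Q \<noteq> {} \<or> (shift (LR a b) (0) (0)) \<inter> Q \<noteq> {} \<or> (shift (LR2 a b) (b) (0)) \<inter> Q \<noteq> {} \<or> (shift (LR3 a b) (1) (b)) \<inter> Q \<noteq> {}" unfolding 1 using assms bd by (simp only: segs ab) smt
    then show ?thesis unfolding S_def by auto
  next
    case (2 c d)
    with Q(2) have bd: "0 \<le> c \<and> 0 \<le> d" "c + b + 1 \<le> a+b+1" "d + a + 1 \<le> a+b+1" using n ab by (simp_all add: board_LR)
    have "(shift (L a b) (0) (1)) \<inter> Q \<noteq> {} \<or> (shift (LR a b) (0) (0)) \<inter> Q \<noteq> {} \<or> (shift (LR2 a b) (b) (0)) \<inter> Q \<noteq> {} \<or> (shift (LR3 a b) (1) (b)) \<inter> Q \<noteq> {}" unfolding 2 using assms bd by (simp only: segs ab) smt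
    then show ?thesis unfolding S_def by auto
  next
    case (3 c d)
    with Q(2) have bd: "0 \<le> c \<and> 0 \<le> d" "c + a + 1 \<le> a+b+1" "d + b + 1 \<le> a+b+1" using n ab by (simp_all add: board_LR2)
    have "(shift (L a b) (0) (1)) \<inter> Q \<noteq> {} \<or> (shift (LR a b) (0) (0)) \<inter> Q \<noteq> {} \<or> (shift (LR2 a b) (b) (0)) \<inter> Q \<noteq> {} \<or> (shift (LR3 a b) (1) (b)) \<inter> Q \<noteq> {}" unfolding 3 using assms bd by (simp only: segs ab) smt
    then show ?thesis unfolding S_def by auto
  next
    case (4 c d)
    with Q(2) have bd: "0 \<le> c \<and> 0 \<le> d" "c + b + 1 \<le> a+b+1" "d + a + 1 \<le> a+b+1" using n ab by (simp_all add: board_LR3)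
    have "(shift (L a b) (0) (1)) \<inter> Q \<noteq> {} \<or> (shift (LR a b) (0) (0)) \<inter> Q \<noteq> {} \<or> (shift (LR2 a b) (b) (0)) \<inter> Q \<noteq> {} \<or> (shift (LR3 a b) (1) (b)) \<inter> Q \<noteq> {}" unfolding 4 using assms bd by (simp only: segs ab) smt
    then show ?thesis unfolding S_def by auto
  qed
  have "free_packing (free_copies_L a b) n S" by (rule packing_intro[OF sub valid blk])
  then show ?thesis using cardS n_def by blast
qed

lemma lower:
  fixes a b :: int
  assumes "0 < a" "a \<le> b" "P \<in> free_copies_L a b" "P \<subseteq> board (nat (a+b+1))"
  shows "\<exists>Q\<in>free_copies_L a b. Q \<subseteq> board (nat (a+b+1)) \<and> P \<inter> Q = {}"
proof -
  define n where "n = nat (a+b+1)"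
  have n: "int n = a+b+1" using assms by (simp add: n_def)
  have ab: "0 \<le> a" "0 \<le> b" using assms by auto
  define TL where "TL = shift (L a b) 0 0"
  define BR where "BR = shift (LR2 a b) b a"
  define TR where "TR = shift (LR a b) a 0"
  define BL where "BL = shift (LR3 a b) 0 b"
  have F: "TL \<in> free_copies_L a b" "BR \<in> free_copies_L a b" "TR \<in> free_copies_L a b" "BL \<in> free_copies_L a b"
    unfolding TL_def BR_def TR_def BL_def by (auto intro!: in_F)
  have B: "TL \<subseteq> board n" "BR \<subseteq> board n" "TR \<subseteq> board n" "BL \<subseteq> board n"
    unfolding TL_def BR_def TR_def BL_def using ab n by (simp_all add: board_L board_LR board_LR2 board_LR3)
  from assms(3) show ?thesis
  proof (cases rule: F_cases)
    case (1 c d)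
    with assms(4) have bd: "0 \<le> c \<and> 0 \<le> d" "c + a + 1 \<le> a+b+1" "d + b + 1 \<le> a+b+1" using n ab n_def by (simp_all add: board_L)
    have "\<not> (P \<inter> TL \<noteq> {}) \<or> \<not> (P \<inter> BR \<noteq> {})" unfolding 1 TL_def BR_def using assms bd by (simp only: segs ab) smt
    then show ?thesis using F B n_def by blast
  next
    case (2 c d)
    with assms(4) have bd: "0 \<le> c \<and> 0 \<le> d" "c + b + 1 \<le> a+b+1" "d + a + 1 \<le> a+b+1" using n ab n_def by (simp_all add: board_LR)
    have "\<not> (P \<inter> TR \<noteq> {}) \<or> \<not> (P \<inter> BL \<noteq> {})" unfolding 2 TR_def BL_def using assms bd by (simp only: segs ab) smt
    then show ?thesis using F B n_def by blast
  next
    case (3 c d)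
    with assms(4) have bd: "0 \<le> c \<and> 0 \<le> d" "c + a + 1 \<le> a+b+1" "d + b + 1 \<le> a+b+1" using n ab n_def by (simp_all add: board_LR2)
    have "\<not> (P \<inter> TL \<noteq> {}) \<or> \<not> (P \<inter> BR \<noteq> {})" unfolding 3 TL_def BR_def using assms bd by (simp only: segs ab) smt
    then show ?thesis using F B n_def by blast
  next
    case (4 c d)
    with assms(4) have bd: "0 \<le> c \<and> 0 \<le> d" "c + b + 1 \<le> a+b+1" "d + a + 1 \<le> a+b+1" using n ab n_def by (simp_all add: board_LR3)
    have "\<not> (P \<inter> TR \<noteq> {}) \<or> \<not> (P \<inter> BL \<noteq> {})" unfolding 4 TR_def BL_def using assms bd by (simp only: segs ab) smt
    then show ?thesis using F B n_def by blast
  qed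
qed

lemma finite_S: "valid_arrangement n S \<Longrightarrow> finite S"
proof -
  assume "valid_arrangement n S"
  then have "S \<subseteq> Pow (board n)" unfolding valid_arrangement_def by blast
  moreover have "finite (board n)" unfolding board_def by simp
  ultimately show "finite S" by (meson finite_Pow_iff finite_subset)
qed

lemma card_ge2:
  fixes a b :: int
  assumes "0 < a" "a \<le> b" "free_packing (free_copies_L a b) (nat (a+b+1)) S"
  shows "2 \<le> card S"
proof (rule ccontr)
  define n where "n = nat (a+b+1)"
  have n: "int n = a+b+1" using assms by (simp add: n_def)
  have ab: "0 \<le> a" "0 \<le> b" using assms by auto
  assume "\<not> 2 \<le> card S"
  then have c: "card S = 0 \<or> card S = 1" by linarith
  have sub: "S \<subseteq> free_copies_L a b" and v: "valid_arrangement n S"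
    and mx: "\<And>Q. Q \<in> free_copies_L a b \<Longrightarrow> Q \<notin> S \<Longrightarrow> \<not> valid_arrangement n (insert Q S)"
    using assms(3) unfolding free_packing_def n_def by auto
  have fin: "finite S" using finite_S[OF v] .
  show False
  proof (cases "card S = 0")
    case True
    then have S: "S = {}" using fin by simp
    have Q: "shift (L a b) 0 0 \<in> free_copies_L a b" by (auto intro!: in_F)
    have "shift (L a b) 0 0 \<subseteq> board n" using ab n by (simp add: board_L)
    then have "valid_arrangement n (insert (shift (L a b) 0 0) S)" unfolding S valid_arrangement_def by auto
    with mx[OF Q] S show False by blast
  next
    case False
    with c have "card S = 1" by simp
    then obtain P where S: "S = {P}" by (auto simp: card_Suc_eq)
    have PF: "P \<in> free_copies_L a b" using sub S by auto
    have Pb: "P \<subseteq> board n" using v S unfolding valid_arrangement_def by auto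
    obtain Q where Q: "Q \<in> free_copies_L a b" "Q \<subseteq> board n" "P \<inter> Q = {}"
      using lower[OF assms(1,2) PF] Pb n_def by blast
    have Pne: "P \<noteq> {}"
      using PF by (cases rule: F_cases) (auto simp: segs ab hseg_def)
    have "Q \<noteq> P" using Q(3) Pne by auto
    then have "Q \<notin> S" using S by auto
    moreover have "valid_arrangement n (insert Q S)"
      using Q Pb S unfolding valid_arrangement_def by auto
    ultimately show False using mx[OF Q(1)] by blast
  qed
qed

theorem theorem5:
  fixes a b :: int
  assumes "0 < a" and "a \<le> b"
  shows "2 \<le> cp_free_L a b \<and> cp_free_L a b \<le> 5"
proof -
  have ex: "\<exists>S. free_packing (free_copies_L a b) (nat (a+b+1)) S \<and> card S \<le> 5"
  proof -
    consider "b \<le> a+1" | "a+2 \<le> b" "b \<le> 2*a+2" | "a = 1" "2 \<le> b" | "2 \<le> a" "2*a \<le> b"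
      using assms by linarith
    then show ?thesis
    proof cases
      case 1 then show ?thesis using T1 assms by blast
    next
      case 2 then show ?thesis using T2 assms by blast
    next
      case 3 then show ?thesis using T4 by blast
    next
      case 4 then show ?thesis using T3 by blast
    qed
  qed
  then obtain S where S: "free_packing (free_copies_L a b) (nat (a+b+1)) S" "card S \<le> 5" by blast
  have "cp_free_L a b \<le> card S"
    unfolding cp_free_L_def by (rule Least_le) (use S in blast)
  then have up: "cp_free_L a b \<le> 5" using S(2) by linarith
  have lo: "2 \<le> cp_free_L a b"
    unfolding cp_free_L_def
    by (rule LeastI2_ex) (use S card_ge2[OF assms] in auto)
  show ?thesis using up lo by simp
qed

end
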